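(* Let $K\ge 1$, and for each class $k\in\{1,\dots,K\}$ let $\lambda_k>0$, $\mu_k>0$ and $\theta_k\ge 0$. Consider the continuous-time Markov process $\mathbf{N}(t)=(N_1(t),\dots,N_K(t))$ on $\mathbb{N}^K$ whose only transitions from a state $\mathbf{n}=(n_1,\dots,n_K)$ are: to $\mathbf{n}+\mathbf{e}_k$ at rate $\lambda_k$, and, if $n_k>0$, to $\mathbf{n}-\mathbf{e}_k$ at rate $n_k\mu_k/L(\mathbf{n})+n_k\theta_k$, where $\mathbf{e}_k$ is the $k$-th unit vector and $L(\mathbf{n})=\sum_{j=1}^K n_j$. Let $\rho_k=\lambda_k/\mu_k$ and let $S=\{k:\theta_k=0\}$ be the set of static classes. Then $\mathbf{N}(t)$ has a stationary regime (i.e., is positive recurrent / ergodic) if and only if $$\rho_S:=\sum_{k\in S}\rho_k<1.$$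
   Context: This is the flow-level model of a single cell of capacity $C$ shared equally (processor sharing) among active users, with class-$k$ users arriving as a Poisson process of rate $\lambda_k$, having exponentially distributed data volumes of mean $\sigma_k$ (so $\mu_k=C/\sigma_k$), and, for mobile classes ($\theta_k>0$), leaving the cell before service completion after an exponential residual sojourn time of rate $\theta_k$ (processor-sharing queue with impatience). A class with $\theta_k=0$ is called static. If $S$ is empty, the sum $\rho_S$ is $0$. *)

theory Defs
  imports "HOL-Analysis.Analysis"
begin

definition exit_rate :: "'s set \<Rightarrow> ('s \<Rightarrow> 's \<Rightarrow> real) \<Rightarrow> 's \<Rightarrow> real" where
  "exit_rate S q n = infsum (\<lambda>m. q n m) (S - {n})"

definition stationary_distribution ::
  "'s set \<Rightarrow> ('s \<Rightarrow> 's \<Rightarrow> real) \<Rightarrow> ('s \<Rightarrow> real) \<Rightarrow> bool" where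
  "stationary_distribution S q p \<longleftrightarrow>
     (\<forall>n\<in>S. p n \<ge> 0) \<and> (p has_sum 1) S \<and>
     (\<forall>m\<in>S. ((\<lambda>n. p n * q n m) has_sum (p m * exit_rate S q m)) (S - {m}))"

definition has_stationary_regime :: "'s set \<Rightarrow> ('s \<Rightarrow> 's \<Rightarrow> real) \<Rightarrow> bool" where
  "has_stationary_regime S q \<longleftrightarrow> (\<exists>p. stationary_distribution S q p)"

(* State space N^K: vectors indexed by classes 0..K-1, zero outside. *)
definition states :: "nat \<Rightarrow> (nat \<Rightarrow> nat) set" where
  "states K = {n. \<forall>k\<ge>K. n k = 0}"

definition load :: "nat \<Rightarrow> (nat \<Rightarrow> nat) \<Rightarrow> nat" where
  "load K n = (\<Sum>j<K. n j)"

definition ps_rate :: "nat \<Rightarrow> (nat \<Rightarrow> real) \<Rightarrow> (nat \<Rightarrow> real) \<Rightarrow> (nat \<Rightarrow> real)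
    \<Rightarrow> (nat \<Rightarrow> nat) \<Rightarrow> (nat \<Rightarrow> nat) \<Rightarrow> real" where
  "ps_rate K lam mu th n m =
     (\<Sum>k<K. (if m = n(k := n k + 1) then lam k else 0)
          + (if n k > 0 \<and> m = n(k := n k - 1)
             then real (n k) * mu k / real (load K n) + real (n k) * th k else 0))"

end

theory Submission
  imports Defs "HOL-Library.Diagonal_Subsequence" "HOL-Analysis.Harmonic_Numbers"
begin

lemma load_upd_Suc:
  assumes "k < K" shows "load K (n(k := n k + 1)) = load K n + 1"
proof -
  have "load K (n(k := n k + 1)) = (\<Sum>j<K. n j + (if j = k then 1 else 0))"
    unfolding load_def by (intro sum.cong) auto
  also have "\<dots> = load K n + 1" using assms by (simp add: sum.distrib load_def)
  finally show ?thesis .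
qed

lemma load_upd_pred:
  assumes "k < K" "n k > 0" shows "load K (n(k := n k - 1)) + 1 = load K n"
proof -
  let ?m = "n(k := n k - 1)"
  have "?m(k := ?m k + 1) = n" using assms by auto
  then show ?thesis using load_upd_Suc[OF assms(1), of ?m] by simp
qed

lemma states_upd: "n \<in> states K \<Longrightarrow> k < K \<Longrightarrow> n(k := v) \<in> states K"
  by (auto simp: states_def)

lemma finite_B: "finite {n \<in> states K. load K n \<le> j}"
proof -
  have "{n \<in> states K. load K n \<le> j} \<subseteq> {f. \<forall>x. (x \<in> {..<K} \<longrightarrow> f x \<in> {..j}) \<and> (x \<notin> {..<K} \<longrightarrow> f x = 0)}"
  proof (intro subsetI CollectI allI conjI impI)
    fix n x assume n: "n \<in> {n \<in> states K. load K n \<le> j}" "x \<in> {..<K}"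
    then have n: "n \<in> states K" "load K n \<le> j" "x < K" by auto
    have "n x \<le> load K n" unfolding load_def using n(3) by (intro member_le_sum) auto
    then show "n x \<in> {..j}" using n by auto
  next
    fix n x assume "n \<in> {n \<in> states K. load K n \<le> j}" "x \<notin> {..<K}" then show "n x = 0" by (auto simp: states_def)
  qed
  then show ?thesis by (rule finite_subset) (intro finite_set_of_finite_funs, auto)
qed

lemma countable_states: "countable (states K)"
proof (rule countable_image_inj_on)
  show "countable ((\<lambda>n. map n [0..<K]) ` states K)" by simp
  show "inj_on (\<lambda>n. map n [0..<K]) (states K)"
  proof (rule inj_onI)
    fix x y assume xy: "x \<in> states K" "y \<in> states K" "map x [0..<K] = map y [0..<K]"
    show "x = y"
    proof
      fix k show "x k = y k"
      proof (cases "k < K")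
        case True then show ?thesis using xy(3) by (metis map_eq_conv set_upt atLeastLessThan_iff zero_le)
      next
        case False then show ?thesis using xy(1,2) by (auto simp: states_def)
      qed
    qed
  qed
qed


definition dr :: "nat \<Rightarrow> (nat \<Rightarrow> real) \<Rightarrow> (nat \<Rightarrow> real) \<Rightarrow> (nat \<Rightarrow> nat) \<Rightarrow> nat \<Rightarrow> real" where
  "dr K mu th n k = real (n k) * mu k / real (load K n) + real (n k) * th k"

definition qout :: "nat \<Rightarrow> (nat \<Rightarrow> real) \<Rightarrow> (nat \<Rightarrow> real) \<Rightarrow> (nat \<Rightarrow> real) \<Rightarrow> (nat \<Rightarrow> nat) \<Rightarrow> real" where
  "qout K lam mu th n = (\<Sum>k<K. lam k + (if n k > 0 then dr K mu th n k else 0))"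

definition BB :: "nat \<Rightarrow> nat \<Rightarrow> (nat \<Rightarrow> nat) set" where
  "BB K j = {n \<in> states K. load K n \<le> j}"

lemma ps_sum:
  assumes "finite X" "\<And>k. k < K \<Longrightarrow> n(k := n k + 1) \<in> X"
    "\<And>k. k < K \<Longrightarrow> n k > 0 \<Longrightarrow> n(k := n k - 1) \<in> X"
  shows "(\<Sum>m\<in>X. ps_rate K lam mu th n m * h m) =
    (\<Sum>k<K. lam k * h (n(k := n k + 1)) + (if n k > 0 then dr K mu th n k * h (n(k := n k - 1)) else 0))"
proof -
  have "(\<Sum>m\<in>X. ps_rate K lam mu th n m * h m) =
     (\<Sum>m\<in>X. \<Sum>k<K. ((if m = n(k := n k + 1) then lam k else 0)
          + (if n k > 0 \<and> m = n(k := n k - 1) then dr K mu th n k else 0)) * h m)"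
    unfolding ps_rate_def dr_def sum_distrib_right by simp
  also have "\<dots> = (\<Sum>k<K. \<Sum>m\<in>X. ((if m = n(k := n k + 1) then lam k else 0)
          + (if n k > 0 \<and> m = n(k := n k - 1) then dr K mu th n k else 0)) * h m)"
    by (rule sum.swap)
  also have "\<dots> = (\<Sum>k<K. lam k * h (n(k := n k + 1)) + (if n k > 0 then dr K mu th n k * h (n(k := n k - 1)) else 0))"
  proof (intro sum.cong refl)
    fix k assume k: "k \<in> {..<K}"
    have "(\<Sum>m\<in>X. ((if m = n(k := n k + 1) then lam k else 0)
          + (if n k > 0 \<and> m = n(k := n k - 1) then dr K mu th n k else 0)) * h m)
      = (\<Sum>m\<in>X. (if m = n(k := n k + 1) then lam k * h m else 0))
        + (\<Sum>m\<in>X. (if n k > 0 \<and> m = n(k := n k - 1) then dr K mu th n k * h m else 0))"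
      unfolding sum.distrib[symmetric] by (intro sum.cong) (auto simp: distrib_right)
    also have "\<dots> = lam k * h (n(k := n k + 1)) + (if n k > 0 then dr K mu th n k * h (n(k := n k - 1)) else 0)"
      using assms k by (auto simp: sum.delta' sum.neutral)
    finally show "(\<Sum>m\<in>X. ((if m = n(k := n k + 1) then lam k else 0)
          + (if n k > 0 \<and> m = n(k := n k - 1) then dr K mu th n k else 0)) * h m)
      = lam k * h (n(k := n k + 1)) + (if n k > 0 then dr K mu th n k * h (n(k := n k - 1)) else 0)" .
  qed
  finally show ?thesis .
qed

lemma ps_nz:
  assumes "ps_rate K lam mu th n m \<noteq> 0"
  shows "\<exists>k<K. m = n(k := n k + 1) \<or> (n k > 0 \<and> m = n(k := n k - 1))"
proof (rule ccontr)
  assume "\<not> ?thesis"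
  then have "ps_rate K lam mu th n m = 0" unfolding ps_rate_def by (intro sum.neutral) auto
  with assms show False by simp
qed

lemma ps_self: "ps_rate K lam mu th n n = 0"
proof -
  have "n \<noteq> n(k := n k + 1)" for k by (metis fun_upd_same n_not_Suc_n Suc_eq_plus1)
  moreover have "n k > 0 \<Longrightarrow> n \<noteq> n(k := n k - 1)" for k by (metis fun_upd_same diff_less less_numeral_extra(1) less_irrefl)
  ultimately show ?thesis unfolding ps_rate_def by (intro sum.neutral) auto
qed

lemma ps_nz_load:
  assumes "ps_rate K lam mu th n m \<noteq> 0" "n \<in> states K"
  shows "m \<in> states K \<and> (load K m = load K n + 1 \<or> load K m + 1 = load K n)"
  using ps_nz[OF assms(1)] load_upd_Suc load_upd_pred states_upd[OF assms(2)] by metis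

lemma finite_BB: "finite (BB K j)" unfolding BB_def by (rule finite_B)

lemma BB_upd_Suc: "n \<in> states K \<Longrightarrow> k < K \<Longrightarrow> load K n < j \<Longrightarrow> n(k := n k + 1) \<in> BB K j"
  using load_upd_Suc[of k K n] by (auto simp: BB_def states_upd)

lemma BB_upd_pred: "n \<in> states K \<Longrightarrow> k < K \<Longrightarrow> n k > 0 \<Longrightarrow> load K n \<le> j + 1 \<Longrightarrow> n(k := n k - 1) \<in> BB K j"
  using load_upd_pred[of k K n] by (auto simp: BB_def states_upd)

lemma ps_sum_BB:
  assumes "n \<in> states K" "load K n < j"
  shows "(\<Sum>m\<in>BB K j. ps_rate K lam mu th n m * h m) =
    (\<Sum>k<K. lam k * h (n(k := n k + 1)) + (if n k > 0 then dr K mu th n k * h (n(k := n k - 1)) else 0))"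
  using assms by (intro ps_sum finite_BB BB_upd_Suc BB_upd_pred) auto

lemma exit_rate_eq:
  assumes "n \<in> states K"
  shows "exit_rate (states K) (ps_rate K lam mu th) n = qout K lam mu th n"
proof -
  let ?q = "ps_rate K lam mu th"
  have "(?q n has_sum (\<Sum>m\<in>BB K (load K n + 1) - {n}. ?q n m)) (states K - {n})"
  proof (rule has_sum_finite_neutralI)
    show "finite (BB K (load K n + 1) - {n})" using finite_BB by auto
    show "BB K (load K n + 1) - {n} \<subseteq> states K - {n}" by (auto simp: BB_def)
    show "?q n m = 0" if "m \<in> states K - {n} - (BB K (load K n + 1) - {n})" for m
      using that ps_nz_load[OF _ assms, of lam mu th m] by (auto simp: BB_def)
  qed simp
  moreover have "(\<Sum>m\<in>BB K (load K n + 1) - {n}. ?q n m) = (\<Sum>m\<in>BB K (load K n + 1). ?q n m * 1)"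
    by (subst sum_diff1) (auto simp: ps_self finite_BB)
  moreover have "\<dots> = qout K lam mu th n"
    using ps_sum_BB[OF assms, of "load K n + 1" lam mu th "\<lambda>_. 1"] 
    apply (simp add: qout_def)
    apply (simp only: mult_1_right)
    done
  ultimately show ?thesis unfolding exit_rate_def by (metis infsumI)
qed


lemma sum_upd_real:
  fixes F :: "nat \<Rightarrow> nat \<Rightarrow> real"
  assumes "k < K"
  shows "(\<Sum>j<K. F j ((n(k := v)) j)) = (\<Sum>j<K. F j (n j)) - F k (n k) + F k v"
proof -
  have "(\<Sum>j<K. F j ((n(k := v)) j)) = F k v + (\<Sum>j\<in>{..<K} - {k}. F j ((n(k := v)) j))"
    using assms by (subst sum.remove[of _ k]) auto
  moreover have "(\<Sum>j<K. F j (n j)) = F k (n k) + (\<Sum>j\<in>{..<K} - {k}. F j (n j))"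
    using assms by (subst sum.remove[of _ k]) auto
  moreover have "(\<Sum>j\<in>{..<K} - {k}. F j ((n(k := v)) j)) = (\<Sum>j\<in>{..<K} - {k}. F j (n j))"
    by (intro sum.cong) auto
  ultimately show ?thesis by simp
qed

locale psq =
  fixes K :: nat and lam mu th :: "nat \<Rightarrow> real"
  assumes K1: "K \<ge> 1"
    and lam_pos: "\<And>k. k < K \<Longrightarrow> lam k > 0"
    and mu_pos: "\<And>k. k < K \<Longrightarrow> mu k > 0"
    and th_nn: "\<And>k. k < K \<Longrightarrow> th k \<ge> 0"
begin

abbreviation "q \<equiv> ps_rate K lam mu th"
abbreviation "st \<equiv> states K"
abbreviation "qo \<equiv> qout K lam mu th"
abbreviation "z \<equiv> (\<lambda>_. 0 :: nat)"

lemma dr_nn: "k < K \<Longrightarrow> dr K mu th n k \<ge> 0"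
  unfolding dr_def using mu_pos[of k] th_nn[of k] by (intro add_nonneg_nonneg divide_nonneg_nonneg mult_nonneg_nonneg) auto

lemma dr_pos: "k < K \<Longrightarrow> n k > 0 \<Longrightarrow> dr K mu th n k > 0"
proof -
  assume k: "k < K" "n k > 0"
  have "n k \<le> load K n" unfolding load_def using k by (intro member_le_sum) auto
  then have "real (n k) * mu k / real (load K n) > 0" using k mu_pos[of k] by auto
  moreover have "real (n k) * th k \<ge> 0" using th_nn[of k] k by auto
  ultimately show ?thesis unfolding dr_def by linarith
qed

lemma term_nn: "j < K \<Longrightarrow> 0 \<le> (if P then lam j else 0) + (if Q then real (n j) * mu j / real (load K n) + real (n j) * th j else 0)"
  using lam_pos[of j] dr_nn[of j n, unfolded dr_def] by (cases P; cases Q) auto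

lemma q_nn: "q n m \<ge> 0"
  unfolding ps_rate_def by (intro sum_nonneg term_nn) simp

lemma q_down: assumes "k < K" "n k > 0" shows "q n (n(k := n k - 1)) \<ge> dr K mu th n k"
proof -
  let ?g = "\<lambda>j. (if n(k := n k - 1) = n(j := n j + 1) then lam j else 0)
          + (if n j > 0 \<and> n(k := n k - 1) = n(j := n j - 1)
             then real (n j) * mu j / real (load K n) + real (n j) * th j else 0)"
  have "?g k \<le> (\<Sum>j<K. ?g j)"
    by (rule member_le_sum) (use assms term_nn in auto)
  moreover have "?g k = (if n(k := n k - 1) = n(k := n k + 1) then lam k else 0) + dr K mu th n k"
    using assms by (simp add: dr_def)
  moreover have "(if n(k := n k - 1) = n(k := n k + 1) then lam k else 0) \<ge> 0"
    using lam_pos[OF assms(1)] by simp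
  ultimately show ?thesis unfolding ps_rate_def by linarith
qed

lemma qo_nn: "qo n \<ge> 0"
  unfolding qout_def using lam_pos dr_nn by (intro sum_nonneg add_nonneg_nonneg) (auto simp: less_imp_le)

lemma balance_fin:
  assumes "stationary_distribution st q p" "m \<in> st"
  shows "p m * qo m = (\<Sum>n\<in>BB K (load K m + 1). p n * q n m)"
proof -
  have h1: "((\<lambda>n. p n * q n m) has_sum (p m * qo m)) (st - {m})"
    using assms exit_rate_eq[OF assms(2)] unfolding stationary_distribution_def by auto
  have h2: "((\<lambda>n. p n * q n m) has_sum (\<Sum>n\<in>BB K (load K m + 1) - {m}. p n * q n m)) (st - {m})"
  proof (rule has_sum_finite_neutralI)
    show "finite (BB K (load K m + 1) - {m})" using finite_BB by auto
    show "BB K (load K m + 1) - {m} \<subseteq> st - {m}" by (auto simp: BB_def)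
    show "p n * q n m = 0" if "n \<in> st - {m} - (BB K (load K m + 1) - {m})" for n
      using that ps_nz_load[of K lam mu th n m] by (auto simp: BB_def)
  qed simp
  have "(\<Sum>n\<in>BB K (load K m + 1) - {m}. p n * q n m) = (\<Sum>n\<in>BB K (load K m + 1). p n * q n m)"
    by (subst sum_diff1) (auto simp: ps_self finite_BB)
  then show ?thesis using has_sum_unique[OF h1 h2] by simp
qed

lemma balance_fin_rev:
  assumes "\<And>n. n \<in> st \<Longrightarrow> p n \<ge> 0" "(p has_sum 1) st"
    "\<And>m. m \<in> st \<Longrightarrow> p m * qo m = (\<Sum>n\<in>BB K (load K m + 1). p n * q n m)"
  shows "stationary_distribution st q p"
  unfolding stationary_distribution_def
proof (intro conjI ballI)
  fix m assume m: "m \<in> st"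
  have h2: "((\<lambda>n. p n * q n m) has_sum (\<Sum>n\<in>BB K (load K m + 1) - {m}. p n * q n m)) (st - {m})"
  proof (rule has_sum_finite_neutralI)
    show "finite (BB K (load K m + 1) - {m})" using finite_BB by auto
    show "BB K (load K m + 1) - {m} \<subseteq> st - {m}" by (auto simp: BB_def)
    show "p n * q n m = 0" if "n \<in> st - {m} - (BB K (load K m + 1) - {m})" for n
      using that ps_nz_load[of K lam mu th n m] by (auto simp: BB_def)
  qed simp
  have "(\<Sum>n\<in>BB K (load K m + 1) - {m}. p n * q n m) = (\<Sum>n\<in>BB K (load K m + 1). p n * q n m)"
    by (subst sum_diff1) (auto simp: ps_self finite_BB)
  then show "((\<lambda>n. p n * q n m) has_sum p m * exit_rate st q m) (st - {m})"
    using h2 assms(3)[OF m] exit_rate_eq[OF m] by simp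
qed (use assms in auto)

lemma z_st: "z \<in> st" by (simp add: states_def)

lemma load_z_iff: assumes n: "n \<in> st" shows "load K n = 0 \<longleftrightarrow> n = z"
proof
  assume "load K n = 0"
  then have a: "\<forall>k<K. n k = 0" unfolding load_def by simp
  have b: "\<forall>k. K \<le> k \<longrightarrow> n k = 0" using n by (simp add: states_def)
  show "n = z"
  proof
    fix k show "n k = z k"
    proof (cases "k < K")
      case True then show ?thesis using a by simp
    next
      case False then show ?thesis using b by simp
    qed
  qed
next
  assume "n = z" then show "load K n = 0" by (simp add: load_def)
qed

lemma p_z_pos:
  assumes "stationary_distribution st q p"
  shows "p z > 0"
proof (rule ccontr)
  assume "\<not> p z > 0"
  moreover have pnn: "\<And>n. n \<in> st \<Longrightarrow> p n \<ge> 0" using assms unfolding stationary_distribution_def by auto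
  ultimately have pz: "p z = 0" using z_st by force
  have "\<forall>n\<in>st. load K n = l \<longrightarrow> p n = 0" for l
  proof (induction l)
    case 0 then show ?case using pz load_z_iff by (auto simp: load_def)
  next
    case (Suc l)
    show ?case
    proof (intro ballI impI)
      fix n assume n: "n \<in> st" "load K n = Suc l"
      obtain k where k: "k < K" "n k > 0"
      proof -
        have "load K z = 0" by (simp add: load_def)
        then have "n \<noteq> z" using n(2) by auto
        then obtain k where nk: "n k \<noteq> 0" by auto
        moreover have "k < K"
        proof (rule ccontr)
          assume "\<not> k < K" then have "n k = 0" using n(1) by (simp add: states_def)
          then show False using nk by simp
        qed
        ultimately show ?thesis using that by auto
      qed
      let ?m = "n(k := n k - 1)"
      have m: "?m \<in> st" "load K ?m = l" using states_upd[OF n(1) k(1)] load_upd_pred[of k K n, OF k] n(2) by auto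
      have pm: "p ?m = 0" using Suc.IH m by blast
      have s0: "(\<Sum>n'\<in>BB K (load K ?m + 1). p n' * q n' ?m) = 0" using balance_fin[OF assms m(1)] pm by simp
      have nB: "n \<in> BB K (load K ?m + 1)" using n m by (auto simp: BB_def)
      have nn: "\<And>n'. n' \<in> BB K (load K ?m + 1) \<Longrightarrow> p n' * q n' ?m \<ge> 0"
        using pnn q_nn by (auto simp: BB_def)
      have "\<forall>x\<in>BB K (load K ?m + 1). p x * q x ?m = 0"
        by (rule iffD1[OF sum_nonneg_eq_0_iff[OF finite_BB nn] s0])
      then have "p n * q n ?m = 0" using nB by blast
      moreover have "q n ?m > 0" using q_down[of k n, OF k] dr_pos[of k n, OF k] by linarith
      ultimately show "p n = 0" by simp
    qed
  qed
  then have "\<forall>n\<in>st. p n = 0" by blast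
  then have h0: "(p has_sum 0) st" by (intro has_sum_0) auto
  have h1: "(p has_sum 1) st" using assms unfolding stationary_distribution_def by auto
  from has_sum_unique[OF h0 h1] show False by simp
qed

end

context psq
begin

definition "cS k = (if th k = 0 then 1 / mu k else 0)"
definition "fS n = (\<Sum>k<K. cS k * real (n k))"
definition "rhoS = (\<Sum>k<K. cS k * lam k)"
definition "sd n = (\<Sum>k<K. (if 0 < n k then dr K mu th n k * cS k else 0))"
definition "WW = (\<Sum>k<K. 1 / mu k)"
definition "Lam = (\<Sum>k<K. lam k)"

lemma cS_nn: "k < K \<Longrightarrow> cS k \<ge> 0" using mu_pos[of k] by (simp add: cS_def)

lemma WW_nn: "WW \<ge> 0" unfolding WW_def using mu_pos by (intro sum_nonneg) (simp add: less_imp_le)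
lemma Lam_nn: "Lam \<ge> 0" unfolding Lam_def using lam_pos by (intro sum_nonneg) (simp add: less_imp_le)

lemma rhoS_eq: "rhoS = (\<Sum>k\<in>{k. k < K \<and> th k = 0}. lam k / mu k)"
proof -
  have "rhoS = (\<Sum>k<K. if th k = 0 then lam k / mu k else 0)"
    unfolding rhoS_def cS_def by (intro sum.cong) auto
  also have "\<dots> = (\<Sum>k\<in>{..<K} \<inter> {k. th k = 0}. lam k / mu k)"
    by (subst sum.inter_restrict) auto
  also have "{..<K} \<inter> {k. th k = 0} = {k. k < K \<and> th k = 0}" by auto
  finally show ?thesis .
qed

lemma fS_nn: "fS n \<ge> 0" unfolding fS_def using cS_nn by (intro sum_nonneg) simp

lemma fS_up: "k < K \<Longrightarrow> fS (n(k := n k + 1)) = fS n + cS k"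
  unfolding fS_def by (subst sum_upd_real[where F = "\<lambda>j v. cS j * real v"]) (auto simp: algebra_simps)

lemma fS_down: "k < K \<Longrightarrow> n k > 0 \<Longrightarrow> fS (n(k := n k - 1)) = fS n - cS k"
  unfolding fS_def by (subst sum_upd_real[where F = "\<lambda>j v. cS j * real v"]) (auto simp: algebra_simps of_nat_diff)

lemma fS_up': "k < K \<Longrightarrow> fS (n(k := Suc (n k))) = fS n + cS k"
  using fS_up by simp

lemma fS_down': "k < K \<Longrightarrow> n k > 0 \<Longrightarrow> fS (n(k := n k - Suc 0)) = fS n - cS k"
  using fS_down by simp

lemma nk_le_load: "k < K \<Longrightarrow> n k \<le> load K n"
  unfolding load_def by (intro member_le_sum) auto

lemma fS_le: "fS n \<le> WW * real (load K n)"
proof -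
  have "fS n \<le> (\<Sum>k<K. 1 / mu k * real (load K n))"
    unfolding fS_def
  proof (intro sum_mono)
    fix k assume k: "k \<in> {..<K}"
    then have "cS k \<le> 1 / mu k" "cS k \<ge> 0" "1 / mu k \<ge> 0" using mu_pos[of k] by (auto simp: cS_def)
    moreover have "real (n k) \<le> real (load K n)" using nk_le_load[of k n] k by simp
    ultimately show "cS k * real (n k) \<le> 1 / mu k * real (load K n)"
      by (intro mult_mono) auto
  qed
  then show ?thesis by (simp add: WW_def sum_distrib_right)
qed

lemma sd_eq: "sd n = (\<Sum>k<K. if th k = 0 then real (n k) / real (load K n) else 0)"
  unfolding sd_def
proof (intro sum.cong refl)
  fix k assume k: "k \<in> {..<K}"
  show "(if 0 < n k then dr K mu th n k * cS k else 0) = (if th k = 0 then real (n k) / real (load K n) else 0)"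
    using mu_pos[of k] k by (auto simp: dr_def cS_def)
qed

lemma sd_nn: "sd n \<ge> 0"
  unfolding sd_eq by (intro sum_nonneg) auto

lemma sd_le: "sd n \<le> 1"
proof -
  have "sd n \<le> (\<Sum>k<K. real (n k) / real (load K n))"
    unfolding sd_eq by (intro sum_mono) auto
  also have "\<dots> = (\<Sum>k<K. real (n k)) / real (load K n)"
    by (simp add: sum_divide_distrib)
  also have "\<dots> = real (load K n) / real (load K n)"
    by (simp add: load_def)
  also have "\<dots> \<le> 1" by simp
  finally show ?thesis .
qed

lemma sd_z: "sd z = 0" unfolding sd_def by simp

lemma G_minus:
  fixes h :: "(nat \<Rightarrow> nat) \<Rightarrow> real"
  shows "(\<Sum>k<K. lam k * h (n(k := n k + 1)) + (if n k > 0 then dr K mu th n k * h (n(k := n k - 1)) else 0))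
     - c * qo n = (\<Sum>k<K. lam k * (h (n(k := n k + 1)) - c) + (if n k > 0 then dr K mu th n k * (h (n(k := n k - 1)) - c) else 0))"
proof -
  have "c * qo n = (\<Sum>k<K. lam k * c + (if n k > 0 then dr K mu th n k * c else 0))"
    unfolding qout_def sum_distrib_left by (intro sum.cong) (auto simp: algebra_simps)
  then show ?thesis by (simp add: sum_subtractf[symmetric] algebra_simps if_distrib cong: if_cong)
qed

lemma q_zero_far:
  assumes "n \<in> st" "load K m + 1 < load K n"
  shows "q n m = 0"
  using ps_nz_load[OF _ assms(1), of lam mu th m] assms(2) by auto

lemma key_ineq:
  assumes stat: "stationary_distribution st q p" and rho: "rhoS \<ge> 1" and M: "M \<ge> 1"
  shows "p z \<le> (1 + real M * WW * Lam) * (\<Sum>n\<in>BB K M. if load K n = M then p n else 0)"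
proof -
  define h where "h m = (if m \<in> BB K M then fS m else 0)" for m
  define G where "G n = (\<Sum>k<K. lam k * h (n(k := n k + 1)) + (if n k > 0 then dr K mu th n k * h (n(k := n k - 1)) else 0))" for n
  define T where "T n = G n - (if n \<in> BB K M then fS n * qo n else 0)" for n
  define low where "low n = (if n = z then 1 else 0) - (if load K n = M then 1 + real M * WW * Lam else 0)" for n
  have pnn: "\<And>n. n \<in> st \<Longrightarrow> p n \<ge> 0" using stat unfolding stationary_distribution_def by auto
  have fin: "finite (BB K j)" for j by (rule finite_BB)
  have BBsub: "i \<le> j \<Longrightarrow> BB K i \<subseteq> BB K j" for i j by (auto simp: BB_def)
  have inner: "(\<Sum>m\<in>BB K M. q n m * fS m) = G n" if n: "n \<in> BB K (M + 1)" for n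
  proof -
    have "(\<Sum>m\<in>BB K M. q n m * fS m) = (\<Sum>m\<in>BB K (M + 2) \<inter> BB K M. q n m * fS m)"
      using BBsub[of M "M + 2"] by (simp add: Int_absorb1)
    also have "\<dots> = (\<Sum>m\<in>BB K (M + 2). if m \<in> BB K M then q n m * fS m else 0)"
      by (rule sum.inter_restrict[OF fin])
    also have "\<dots> = (\<Sum>m\<in>BB K (M + 2). q n m * h m)"
      by (intro sum.cong) (auto simp: h_def)
    also have "\<dots> = G n" unfolding G_def using n by (intro ps_sum_BB) (auto simp: BB_def)
    finally show ?thesis .
  qed
  have s1: "(\<Sum>m\<in>BB K M. fS m * (p m * qo m)) = (\<Sum>n\<in>BB K (M + 1). p n * G n)"
  proof -
    have "(\<Sum>m\<in>BB K M. fS m * (p m * qo m)) = (\<Sum>m\<in>BB K M. fS m * (\<Sum>n\<in>BB K (M + 1). p n * q n m))"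
    proof (intro sum.cong refl)
      fix m assume m: "m \<in> BB K M"
      have "p m * qo m = (\<Sum>n\<in>BB K (load K m + 1). p n * q n m)"
        using balance_fin[OF stat] m by (auto simp: BB_def)
      also have "\<dots> = (\<Sum>n\<in>BB K (M + 1). p n * q n m)"
      proof (rule sum.mono_neutral_left[OF fin])
        show "BB K (load K m + 1) \<subseteq> BB K (M + 1)" using m by (auto simp: BB_def)
        show "\<forall>i\<in>BB K (M + 1) - BB K (load K m + 1). p i * q i m = 0"
        proof
          fix i assume "i \<in> BB K (M + 1) - BB K (load K m + 1)"
          then have "i \<in> st" "load K m + 1 < load K i" by (auto simp: BB_def)
          then show "p i * q i m = 0" using q_zero_far by simp
        qed
      qed
      finally show "fS m * (p m * qo m) = fS m * (\<Sum>n\<in>BB K (M + 1). p n * q n m)" by simp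
    qed
    also have "\<dots> = (\<Sum>m\<in>BB K M. \<Sum>n\<in>BB K (M + 1). p n * (q n m * fS m))"
      by (simp add: sum_distrib_left algebra_simps)
    also have "\<dots> = (\<Sum>n\<in>BB K (M + 1). \<Sum>m\<in>BB K M. p n * (q n m * fS m))"
      by (rule sum.swap)
    also have "\<dots> = (\<Sum>n\<in>BB K (M + 1). p n * G n)"
      by (intro sum.cong refl) (simp add: sum_distrib_left[symmetric] inner)
    finally show ?thesis .
  qed
  have s1': "(\<Sum>m\<in>BB K M. fS m * (p m * qo m)) = (\<Sum>n\<in>BB K (M + 1). p n * (if n \<in> BB K M then fS n * qo n else 0))"
  proof -
    have "(\<Sum>m\<in>BB K M. fS m * (p m * qo m)) = (\<Sum>m\<in>BB K (M + 1) \<inter> BB K M. fS m * (p m * qo m))"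
      using BBsub[of M "M + 1"] by (simp add: Int_absorb1)
    also have "\<dots> = (\<Sum>n\<in>BB K (M + 1). if n \<in> BB K M then fS n * (p n * qo n) else 0)"
      by (rule sum.inter_restrict[OF fin])
    also have "\<dots> = (\<Sum>n\<in>BB K (M + 1). p n * (if n \<in> BB K M then fS n * qo n else 0))"
      by (intro sum.cong) auto
    finally show ?thesis .
  qed
  have T0: "(\<Sum>n\<in>BB K (M + 1). p n * T n) = 0"
    using s1 s1' unfolding T_def by (simp add: right_diff_distrib sum_subtractf)
  have Tlow: "T n \<ge> low n" if n: "n \<in> BB K (M + 1)" for n
  proof -
    have nst: "n \<in> st" and nl: "load K n \<le> M + 1" using n by (auto simp: BB_def)
    have hnn: "h m \<ge> 0" for m unfolding h_def using fS_nn by simp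
    consider (a) "load K n < M" | (b) "load K n = M" | (c) "load K n = M + 1" using nl by linarith
    then show ?thesis
    proof cases
      case a
      then have nB: "n \<in> BB K M" using nst by (auto simp: BB_def)
      have "T n = (\<Sum>k<K. lam k * (h (n(k := n k + 1)) - fS n) + (if n k > 0 then dr K mu th n k * (h (n(k := n k - 1)) - fS n) else 0))"
        unfolding T_def G_def using nB G_minus by simp
      also have "\<dots> = (\<Sum>k<K. cS k * lam k - (if n k > 0 then dr K mu th n k * cS k else 0))"
      proof (intro sum.cong refl)
        fix k assume k: "k \<in> {..<K}"
        have "n(k := n k + 1) \<in> BB K M" using BB_upd_Suc[OF nst, of k M] k a by simp
        moreover have "n k > 0 \<Longrightarrow> n(k := n k - 1) \<in> BB K M" using BB_upd_pred[OF nst, of k M] k a by simp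
        ultimately show "lam k * (h (n(k := n k + 1)) - fS n) + (if n k > 0 then dr K mu th n k * (h (n(k := n k - 1)) - fS n) else 0)
           = cS k * lam k - (if n k > 0 then dr K mu th n k * cS k else 0)"
          using k by (auto simp: h_def fS_up fS_down fS_up' fS_down')
      qed
      also have "\<dots> = rhoS - sd n" unfolding rhoS_def sd_def by (simp add: sum_subtractf)
      finally have Tn: "T n = rhoS - sd n" .
      show ?thesis
      proof (cases "n = z")
        case True then show ?thesis using Tn sd_z rho a M by (simp add: low_def)
      next
        case False then show ?thesis using Tn sd_le[of n] rho a by (simp add: low_def)
      qed
    next
      case b
      then have nB: "n \<in> BB K M" using nst by (auto simp: BB_def)
      have "T n = (\<Sum>k<K. lam k * (h (n(k := n k + 1)) - fS n) + (if n k > 0 then dr K mu th n k * (h (n(k := n k - 1)) - fS n) else 0))"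
        unfolding T_def G_def using nB G_minus by simp
      also have "\<dots> = (\<Sum>k<K. - (fS n * lam k) - (if n k > 0 then dr K mu th n k * cS k else 0))"
      proof (intro sum.cong refl)
        fix k assume k: "k \<in> {..<K}"
        have "n(k := n k + 1) \<notin> BB K M" using load_upd_Suc[of k K n] k b by (simp add: BB_def)
        moreover have "n k > 0 \<Longrightarrow> n(k := n k - 1) \<in> BB K M" using BB_upd_pred[OF nst, of k M] k b M by simp
        ultimately show "lam k * (h (n(k := n k + 1)) - fS n) + (if n k > 0 then dr K mu th n k * (h (n(k := n k - 1)) - fS n) else 0)
           = - (fS n * lam k) - (if n k > 0 then dr K mu th n k * cS k else 0)"
          using k by (auto simp: h_def fS_up fS_down fS_up' fS_down' algebra_simps)
      qed
      also have "\<dots> = - (fS n * Lam) - sd n" unfolding Lam_def sd_def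
        by (simp add: sum_subtractf sum_negf sum_distrib_left)
      finally have Tn: "T n = - (fS n * Lam) - sd n" .
      have "fS n * Lam \<le> (WW * real M) * Lam"
        using fS_le[of n] b Lam_nn by (intro mult_right_mono) auto
      moreover have "n \<noteq> z" using b M by (auto simp: load_def)
      ultimately show ?thesis using Tn sd_le[of n] b by (simp add: low_def algebra_simps)
    next
      case c
      then have nB: "n \<notin> BB K M" by (auto simp: BB_def)
      have "T n = G n" unfolding T_def using nB by simp
      also have "G n \<ge> 0" unfolding G_def
        using lam_pos dr_nn hnn by (intro sum_nonneg add_nonneg_nonneg mult_nonneg_nonneg) (auto simp: less_imp_le)
      finally have "T n \<ge> 0" .
      moreover have "n \<noteq> z" using c by (auto simp: load_def)
      ultimately show ?thesis using c by (simp add: low_def)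
    qed
  qed
  have "(\<Sum>n\<in>BB K (M + 1). p n * low n) \<le> (\<Sum>n\<in>BB K (M + 1). p n * T n)"
    using Tlow pnn by (intro sum_mono mult_left_mono) (auto simp: BB_def)
  also have "\<dots> = 0" by (rule T0)
  finally have le0: "(\<Sum>n\<in>BB K (M + 1). p n * low n) \<le> 0" .
  have "(\<Sum>n\<in>BB K (M + 1). p n * low n) = (\<Sum>n\<in>BB K (M + 1). if n = z then p n else 0)
       - (1 + real M * WW * Lam) * (\<Sum>n\<in>BB K (M + 1). if load K n = M then p n else 0)"
  proof -
    have "(\<Sum>n\<in>BB K (M + 1). p n * low n) = (\<Sum>n\<in>BB K (M + 1). (if n = z then p n else 0)
       - (1 + real M * WW * Lam) * (if load K n = M then p n else 0))"
      by (intro sum.cong refl) (simp add: low_def algebra_simps)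
    then show ?thesis by (simp add: sum_subtractf sum_distrib_left)
  qed
  also have "(\<Sum>n\<in>BB K (M + 1). if n = z then p n else 0) = p z"
  proof -
    have "z \<in> BB K (M + 1)" using z_st by (simp add: BB_def load_def)
    then show ?thesis by (simp only: sum.delta[OF fin] if_True)
  qed
  also have "(\<Sum>n\<in>BB K (M + 1). if load K n = M then p n else 0) = (\<Sum>n\<in>BB K M. if load K n = M then p n else 0)"
    by (rule sum.mono_neutral_right[OF fin]) (auto simp: BB_def)
  finally show ?thesis using le0 by simp
qed

lemma stat_imp_rho:
  assumes stat: "stationary_distribution st q p"
  shows "rhoS < 1"
proof (rule ccontr)
  assume "\<not> rhoS < 1"
  then have rho: "rhoS \<ge> 1" by simp
  define pm where "pm M = (\<Sum>n\<in>BB K M. if load K n = M then p n else 0)" for M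
  define a where "a = p z / (1 + WW * Lam)"
  have pnn: "\<And>n. n \<in> st \<Longrightarrow> p n \<ge> 0" using stat unfolding stationary_distribution_def by auto
  have fin: "finite (BB K j)" for j by (rule finite_BB)
  have pz: "p z > 0" by (rule p_z_pos[OF stat])
  have WL: "WW * Lam \<ge> 0" using WW_nn Lam_nn by simp
  have apos: "a > 0" unfolding a_def using pz WL by simp
  have pm_nn: "pm M \<ge> 0" for M unfolding pm_def using pnn by (intro sum_nonneg) (auto simp: BB_def)
  have pm_low: "a / real M \<le> pm M" if M: "M \<ge> 1" for M
  proof -
    have "p z \<le> (1 + real M * WW * Lam) * pm M" using key_ineq[OF stat rho M] by (simp add: pm_def)
    also have "\<dots> \<le> (real M * (1 + WW * Lam)) * pm M"
    proof (rule mult_right_mono[OF _ pm_nn])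
      have "real M * WW * Lam = real M * (WW * Lam)" by simp
      then show "1 + real M * WW * Lam \<le> real M * (1 + WW * Lam)" using M by (simp add: algebra_simps)
    qed
    finally have "p z \<le> (real M * (1 + WW * Lam)) * pm M" .
    moreover have pos: "real M * (1 + WW * Lam) > 0" using M WL by (simp add: add_pos_nonneg)
    moreover have "a / real M = p z / (real M * (1 + WW * Lam))" by (simp add: a_def)
    ultimately show ?thesis by (simp add: pos_divide_le_eq mult.commute)
  qed
  have sum_le: "(\<Sum>M=1..N. pm M) \<le> 1" for N
  proof -
    have "(\<Sum>M=1..N. pm M) = (\<Sum>M=1..N. \<Sum>n\<in>BB K N. if load K n = M then p n else 0)"
    proof (intro sum.cong refl)
      fix M assume "M \<in> {1..N}"
      then have "M \<le> N" by simp
      then show "pm M = (\<Sum>n\<in>BB K N. if load K n = M then p n else 0)"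
        unfolding pm_def by (intro sum.mono_neutral_left[OF fin]) (auto simp: BB_def)
    qed
    also have "\<dots> = (\<Sum>n\<in>BB K N. \<Sum>M=1..N. if load K n = M then p n else 0)" by (rule sum.swap)
    also have "\<dots> \<le> (\<Sum>n\<in>BB K N. p n)"
    proof (intro sum_mono)
      fix n assume n: "n \<in> BB K N"
      have "(\<Sum>M=1..N. if load K n = M then p n else 0) = (if load K n \<in> {1..N} then p n else 0)"
        by (simp add: sum.delta')
      then show "(\<Sum>M=1..N. if load K n = M then p n else 0) \<le> p n" using pnn n by (auto simp: BB_def)
    qed
    also have "\<dots> \<le> infsum p st"
      using stat pnn by (intro finite_sum_le_infsum fin) (auto simp: BB_def stationary_distribution_def dest: has_sum_imp_summable)
    also have "infsum p st = 1" using stat by (auto simp: stationary_distribution_def dest: infsumI)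
    finally show ?thesis .
  qed
  have "a * harm N \<le> 1" for N
  proof -
    have "a * harm N = (\<Sum>M=1..N. a / real M)"
      by (simp add: harm_def sum_distrib_left divide_inverse)
    also have "\<dots> \<le> (\<Sum>M=1..N. pm M)" by (intro sum_mono pm_low) auto
    also have "\<dots> \<le> 1" by (rule sum_le)
    finally show ?thesis .
  qed
  moreover have "\<forall>\<^sub>F N in sequentially. 1 / a < (harm N :: real)"
    using harm_at_top by (simp add: filterlim_at_top_dense)
  then obtain N where "1 / a < (harm N :: real)" by (auto simp: eventually_sequentially)
  ultimately show False using apos by (metis divide_less_eq mult.commute not_le)
qed

end

context psq
begin

definition "cc n = 1 + Lam + (\<Sum>k<K. mu k) + (\<Sum>k<K. real (n k) * th k)"
definition "PP n m = q n m / cc n + (if m = n then 1 - qo n / cc n else 0)"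
definition "stp u = (\<lambda>m. \<Sum>n\<in>BB K (load K m + 1). u n * PP n m)"
definition "p0 = (\<lambda>m. if m = z then 1 else 0 :: real)"
definition "pt t = (stp ^^ t) p0"
definition "supp (u :: (nat \<Rightarrow> nat) \<Rightarrow> real) j \<longleftrightarrow> (\<forall>n. u n \<noteq> 0 \<longrightarrow> n \<in> BB K j)"
definition "Dg g n = (\<Sum>k<K. lam k * (g (n(k := n k + 1)) - g n) + (if n k > 0 then dr K mu th n k * (g (n(k := n k - 1)) - g n) else 0))"

lemma pt_0: "pt 0 = p0" by (simp add: pt_def)
lemma pt_Suc: "pt (Suc t) = stp (pt t)" by (simp add: pt_def)

lemma cc_ge1: "cc n \<ge> 1"
proof -
  have "(\<Sum>k<K. mu k) \<ge> 0" using mu_pos by (intro sum_nonneg) (simp add: less_imp_le)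
  moreover have "(\<Sum>k<K. real (n k) * th k) \<ge> 0" using th_nn by (intro sum_nonneg) simp
  ultimately show ?thesis using Lam_nn unfolding cc_def by linarith
qed

lemma cc_pos: "cc n > 0" using cc_ge1[of n] by simp

lemma dr_le: "k < K \<Longrightarrow> dr K mu th n k \<le> mu k + real (n k) * th k"
proof -
  assume k: "k < K"
  have "real (n k) * mu k / real (load K n) \<le> mu k"
  proof (cases "load K n = 0")
    case True then show ?thesis using mu_pos[OF k] by simp
  next
    case False
    have "real (n k) \<le> real (load K n)" using nk_le_load[OF k] by simp
    then have "real (n k) * mu k \<le> real (load K n) * mu k" using mu_pos[OF k] by (intro mult_right_mono) auto
    then show ?thesis using False by (simp add: divide_le_eq mult.commute)
  qed
  then show ?thesis unfolding dr_def by simp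
qed

lemma qo_le: "qo n \<le> cc n - 1"
proof -
  have "qo n \<le> (\<Sum>k<K. lam k + (mu k + real (n k) * th k))"
    unfolding qout_def
  proof (intro sum_mono)
    fix k assume k: "k \<in> {..<K}"
    show "lam k + (if 0 < n k then dr K mu th n k else 0) \<le> lam k + (mu k + real (n k) * th k)"
      using dr_le[of k n] k mu_pos[of k] th_nn[of k] by auto
  qed
  then show ?thesis unfolding cc_def Lam_def by (simp add: sum.distrib)
qed

lemma PP_nn: "PP n m \<ge> 0"
proof -
  have "qo n / cc n \<le> 1" using qo_le[of n] cc_pos[of n] by (simp add: divide_le_eq)
  then show ?thesis unfolding PP_def using q_nn[of n m] cc_pos[of n] by (auto intro!: add_nonneg_nonneg divide_nonneg_pos)
qed

lemma PP_far: "n \<in> st \<Longrightarrow> load K m + 1 < load K n \<Longrightarrow> PP n m = 0"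
  unfolding PP_def using q_zero_far by auto

lemma PP_nz: assumes "n \<in> st" "PP n m \<noteq> 0" shows "m \<in> st \<and> load K m \<le> load K n + 1"
proof (cases "m = n")
  case True then show ?thesis using assms by simp
next
  case False
  then have "q n m \<noteq> 0" using assms(2) by (simp add: PP_def)
  then show ?thesis using ps_nz_load[OF _ assms(1)] by fastforce
qed

lemma supp_st: "supp u j \<Longrightarrow> u n \<noteq> 0 \<Longrightarrow> n \<in> st" by (auto simp: supp_def BB_def)

lemma supp_sum:
  fixes g :: "(nat \<Rightarrow> nat) \<Rightarrow> real"
  assumes "supp u j" "j \<le> N"
  shows "(\<Sum>n\<in>BB K N. u n * g n) = (\<Sum>n\<in>BB K j. u n * g n)"
proof (intro sum.mono_neutral_right finite_BB)
  show "BB K j \<subseteq> BB K N" using assms(2) by (auto simp: BB_def)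
  show "\<forall>i\<in>BB K N - BB K j. u i * g i = 0"
  proof
    fix i assume "i \<in> BB K N - BB K j"
    then have "u i = 0" using assms(1) unfolding supp_def by blast
    then show "u i * g i = 0" by simp
  qed
qed

lemma supp_stp: assumes "supp u j" shows "supp (stp u) (j + 1)"
  unfolding supp_def
proof (intro allI impI)
  fix m assume "stp u m \<noteq> 0"
  then obtain n where n: "n \<in> BB K (load K m + 1)" "u n * PP n m \<noteq> 0"
    unfolding stp_def by (meson sum.not_neutral_contains_not_neutral)
  then have "n \<in> BB K j" using assms by (auto simp: supp_def)
  moreover have "m \<in> st \<and> load K m \<le> load K n + 1" using n PP_nz[of n m] by (auto simp: BB_def)
  ultimately show "m \<in> BB K (j + 1)" by (auto simp: BB_def)
qed

lemma supp_pt: "supp (pt t) t"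
proof (induction t)
  case 0 then show ?case by (auto simp: supp_def pt_0 p0_def BB_def load_def z_st)
next
  case (Suc t) then show ?case using supp_stp[of "pt t" t] by (simp add: pt_Suc)
qed

lemma stp_nn: "(\<And>n. u n \<ge> 0) \<Longrightarrow> stp u m \<ge> 0"
  unfolding stp_def using PP_nn by (intro sum_nonneg mult_nonneg_nonneg) auto

lemma pt_nn: "pt t n \<ge> 0"
proof (induction t arbitrary: n)
  case 0 then show ?case by (simp add: pt_0 p0_def)
next
  case (Suc t) then show ?case by (simp add: pt_Suc stp_nn)
qed

lemma stp_inner:
  assumes "supp u j" "j < N" "m \<in> BB K N"
  shows "stp u m = (\<Sum>n\<in>BB K N. u n * PP n m)"
proof (cases "load K m + 1 \<le> N")
  case True
  show ?thesis unfolding stp_def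
  proof (rule sum.mono_neutral_left[OF finite_BB])
    show "BB K (load K m + 1) \<subseteq> BB K N" using True by (auto simp: BB_def)
    show "\<forall>i\<in>BB K N - BB K (load K m + 1). u i * PP i m = 0"
    proof
      fix i assume "i \<in> BB K N - BB K (load K m + 1)"
      then have "i \<in> st" "load K m + 1 < load K i" by (auto simp: BB_def)
      then show "u i * PP i m = 0" using PP_far by simp
    qed
  qed
next
  case False
  show ?thesis unfolding stp_def
  proof (rule sum.mono_neutral_right[OF finite_BB])
    show "BB K N \<subseteq> BB K (load K m + 1)" using False by (auto simp: BB_def)
    show "\<forall>i\<in>BB K (load K m + 1) - BB K N. u i * PP i m = 0"
    proof
      fix i assume i: "i \<in> BB K (load K m + 1) - BB K N"
      have "u i = 0"
      proof (rule ccontr)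
        assume "u i \<noteq> 0"
        then have "i \<in> BB K j" using assms(1) unfolding supp_def by blast
        then show False using i assms(2) by (auto simp: BB_def)
      qed
      then show "u i * PP i m = 0" by simp
    qed
  qed
qed

lemma PP_row:
  assumes "n \<in> st" "load K n < N"
  shows "(\<Sum>m\<in>BB K N. PP n m * g m) = g n + Dg g n / cc n"
proof -
  have nB: "n \<in> BB K N" using assms by (auto simp: BB_def)
  have "(\<Sum>m\<in>BB K N. PP n m * g m) = (\<Sum>m\<in>BB K N. q n m * g m) / cc n + (\<Sum>m\<in>BB K N. if m = n then (1 - qo n / cc n) * g m else 0)"
  proof -
    have "(\<Sum>m\<in>BB K N. PP n m * g m) = (\<Sum>m\<in>BB K N. q n m * g m / cc n + (if m = n then (1 - qo n / cc n) * g m else 0))"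
      by (intro sum.cong refl) (simp add: PP_def distrib_right)
    then show ?thesis by (simp add: sum.distrib sum_divide_distrib)
  qed
  also have "(\<Sum>m\<in>BB K N. if m = n then (1 - qo n / cc n) * g m else 0) = (1 - qo n / cc n) * g n"
    using nB by (simp add: sum.delta[OF finite_BB])
  also have "(\<Sum>m\<in>BB K N. q n m * g m) = (\<Sum>k<K. lam k * g (n(k := n k + 1)) + (if n k > 0 then dr K mu th n k * g (n(k := n k - 1)) else 0))"
    by (rule ps_sum_BB[OF assms])
  also have "\<dots> = Dg g n + g n * qo n"
    using G_minus[of g n "g n"] unfolding Dg_def by simp
  finally have e: "(\<Sum>m\<in>BB K N. PP n m * g m) = (Dg g n + g n * qo n) / cc n + (1 - qo n / cc n) * g n" .
  have "(Dg g n + g n * qo n) / cc n + (1 - qo n / cc n) * g n = g n + Dg g n / cc n"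
    using cc_pos[of n] by (simp add: field_simps)
  then show ?thesis using e by simp
qed

lemma stp_sum:
  assumes "supp u j" "j < N"
  shows "(\<Sum>m\<in>BB K N. stp u m * g m) = (\<Sum>n\<in>BB K N. u n * (g n + Dg g n / cc n))"
proof -
  have "(\<Sum>m\<in>BB K N. stp u m * g m) = (\<Sum>m\<in>BB K N. \<Sum>n\<in>BB K N. u n * PP n m * g m)"
    using stp_inner[OF assms] by (simp add: sum_distrib_right)
  also have "\<dots> = (\<Sum>n\<in>BB K N. \<Sum>m\<in>BB K N. u n * PP n m * g m)" by (rule sum.swap)
  also have "\<dots> = (\<Sum>n\<in>BB K N. u n * (g n + Dg g n / cc n))"
  proof (intro sum.cong refl)
    fix n assume n: "n \<in> BB K N"
    show "(\<Sum>m\<in>BB K N. u n * PP n m * g m) = u n * (g n + Dg g n / cc n)"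
    proof (cases "u n = 0")
      case True then show ?thesis by simp
    next
      case False
      then have "n \<in> BB K j" using assms(1) by (auto simp: supp_def)
      then have "n \<in> st" "load K n < N" using assms(2) by (auto simp: BB_def)
      then show ?thesis using PP_row[of n N g] by (simp add: sum_distrib_left[symmetric] mult.assoc)
    qed
  qed
  finally show ?thesis .
qed

lemma Dg_const: "Dg (\<lambda>_. c) n = 0" unfolding Dg_def by (simp cong: if_cong)

lemma pt_mass: "t < N \<Longrightarrow> (\<Sum>n\<in>BB K N. pt t n) = 1"
proof (induction t)
  case 0
  have "z \<in> BB K N" using z_st by (simp add: BB_def load_def)
  then show ?case by (simp add: pt_0 p0_def sum.delta[OF finite_BB])
next
  case (Suc t)
  have "(\<Sum>n\<in>BB K N. pt (Suc t) n) = (\<Sum>n\<in>BB K N. stp (pt t) n * 1)" by (simp add: pt_Suc)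
  also have "\<dots> = (\<Sum>n\<in>BB K N. pt t n * (1 + Dg (\<lambda>_. 1) n / cc n))"
    using Suc.prems by (intro stp_sum[OF supp_pt[of t]]) simp
  also have "\<dots> = 1" using Suc by (simp add: Dg_const)
  finally show ?case .
qed

lemma pt_sum_le: "(\<Sum>n\<in>BB K j. pt t n) \<le> 1"
proof -
  have "(\<Sum>n\<in>BB K j. pt t n) \<le> (\<Sum>n\<in>BB K (max j (t + 1)). pt t n)"
    using pt_nn by (intro sum_mono2 finite_BB) (auto simp: BB_def)
  also have "\<dots> = 1" by (rule pt_mass) simp
  finally show ?thesis .
qed

lemma pt_le1: "pt t n \<le> 1"
proof (cases "pt t n = 0")
  case False
  then have "n \<in> BB K t" using supp_pt[of t] by (auto simp: supp_def)
  then have "pt t n \<le> (\<Sum>n\<in>BB K t. pt t n)" using pt_nn by (intro member_le_sum finite_BB) auto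
  then show ?thesis using pt_sum_le[of t t] by simp
qed simp

end

locale psq1 = psq +
  assumes rho1: "rhoS < 1"
begin

definition "w0 = (1 - rhoS) / (3 * (1 + Lam))"
definition "wv k = (if th k = 0 then 1 / mu k else w0)"
definition "VV n = (\<Sum>k<K. wv k * real (n k))"
definition "XX n = (\<Sum>k<K. real (n k) * th k)"
definition "C0 = 1 + Lam + (\<Sum>k<K. mu k)"
definition "nM n = (\<Sum>k<K. if th k = 0 then 0 else real (n k))"
definition "tm = Min (insert 1 (th ` {k. k < K \<and> th k \<noteq> 0}))"
definition "bb = (\<Sum>k<K. lam k * wv k)"

lemma rhoS_nn: "rhoS \<ge> 0"
  unfolding rhoS_def using cS_nn lam_pos by (intro sum_nonneg mult_nonneg_nonneg) (auto simp: less_imp_le)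

lemma w0_pos: "w0 > 0" unfolding w0_def using rho1 Lam_nn by (intro divide_pos_pos) auto

lemma w0_Lam: "w0 * Lam \<le> (1 - rhoS) / 3"
proof -
  have "w0 * Lam = (1 - rhoS) / 3 * (Lam / (1 + Lam))" unfolding w0_def by (simp add: field_simps)
  also have "\<dots> \<le> (1 - rhoS) / 3 * 1"
    using rho1 Lam_nn by (intro mult_left_mono) auto
  finally show ?thesis by simp
qed

lemma wv_nn: "k < K \<Longrightarrow> wv k \<ge> 0" using mu_pos[of k] w0_pos by (simp add: wv_def less_imp_le)

lemma VV_nn: "VV n \<ge> 0" unfolding VV_def using wv_nn by (intro sum_nonneg) simp

lemma VV_z: "VV z = 0" by (simp add: VV_def)

lemma VV_up: "k < K \<Longrightarrow> VV (n(k := n k + 1)) = VV n + wv k"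
  unfolding VV_def by (subst sum_upd_real[where F = "\<lambda>j v. wv j * real v"]) (auto simp: algebra_simps)

lemma VV_down: "k < K \<Longrightarrow> n k > 0 \<Longrightarrow> VV (n(k := n k - 1)) = VV n - wv k"
  unfolding VV_def by (subst sum_upd_real[where F = "\<lambda>j v. wv j * real v"]) (auto simp: algebra_simps of_nat_diff)

lemma DV_eq: "Dg VV n = bb - (\<Sum>k<K. if n k > 0 then dr K mu th n k * wv k else 0)"
proof -
  have "Dg VV n = (\<Sum>k<K. lam k * wv k - (if n k > 0 then dr K mu th n k * wv k else 0))"
    unfolding Dg_def
  proof (intro sum.cong refl)
    fix k assume k: "k \<in> {..<K}"
    show "lam k * (VV (n(k := n k + 1)) - VV n) + (if n k > 0 then dr K mu th n k * (VV (n(k := n k - 1)) - VV n) else 0)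
       = lam k * wv k - (if n k > 0 then dr K mu th n k * wv k else 0)"
      using k VV_up[of k n] VV_down[of k n] by auto
  qed
  then show ?thesis unfolding bb_def by (simp add: sum_subtractf)
qed

lemma bb_nn: "bb \<ge> 0" unfolding bb_def using lam_pos wv_nn by (intro sum_nonneg mult_nonneg_nonneg) (auto simp: less_imp_le)

lemma DV_le_bb: "Dg VV n \<le> bb"
proof -
  have "(\<Sum>k<K. if n k > 0 then dr K mu th n k * wv k else 0) \<ge> 0"
    using dr_nn wv_nn by (intro sum_nonneg) (auto intro: mult_nonneg_nonneg)
  then show ?thesis using DV_eq[of n] by simp
qed

lemma bb_le: "bb \<le> rhoS + w0 * Lam"
proof -
  have "bb \<le> (\<Sum>k<K. cS k * lam k + w0 * lam k)"
    unfolding bb_def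
  proof (intro sum_mono)
    fix k assume k: "k \<in> {..<K}"
    show "lam k * wv k \<le> cS k * lam k + w0 * lam k"
      using k lam_pos[of k] w0_pos mu_pos[of k] by (auto simp: wv_def cS_def)
  qed
  then show ?thesis unfolding rhoS_def Lam_def by (simp add: sum.distrib sum_distrib_left)
qed

lemma dsum_ge: "(\<Sum>k<K. if n k > 0 then dr K mu th n k * wv k else 0) \<ge> sd n + w0 * XX n"
proof -
  have "sd n + w0 * XX n = (\<Sum>k<K. (if 0 < n k then dr K mu th n k * cS k else 0) + w0 * (real (n k) * th k))"
    unfolding sd_def XX_def by (simp add: sum.distrib sum_distrib_left)
  also have "\<dots> \<le> (\<Sum>k<K. if n k > 0 then dr K mu th n k * wv k else 0)"
  proof (intro sum_mono)
    fix k assume k: "k \<in> {..<K}"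
    have drge: "dr K mu th n k \<ge> real (n k) * th k"
      unfolding dr_def using mu_pos[of k] k by simp
    show "(if 0 < n k then dr K mu th n k * cS k else 0) + w0 * (real (n k) * th k)
        \<le> (if n k > 0 then dr K mu th n k * wv k else 0)"
    proof (cases "th k = 0")
      case True then show ?thesis by (simp add: wv_def cS_def)
    next
      case False
      then show ?thesis using drge w0_pos by (auto simp: wv_def cS_def mult.commute intro: mult_left_mono)
    qed
  qed
  finally show ?thesis .
qed

lemma DV_le: "Dg VV n \<le> rhoS + w0 * Lam - sd n - w0 * XX n"
  using DV_eq[of n] bb_le dsum_ge[of n] by linarith

lemma cc_eq: "cc n = C0 + XX n" unfolding cc_def C0_def XX_def by simp

lemma C0_pos: "C0 \<ge> 1"
proof -
  have "(\<Sum>k<K. mu k) \<ge> 0" using mu_pos by (intro sum_nonneg) (simp add: less_imp_le)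
  then show ?thesis unfolding C0_def using Lam_nn by linarith
qed

lemma XX_nn: "XX n \<ge> 0" unfolding XX_def using th_nn by (intro sum_nonneg) simp

lemma tm_pos: "tm > 0"
proof -
  have "finite (insert 1 (th ` {k. k < K \<and> th k \<noteq> 0}))" by simp
  moreover have "\<forall>x\<in>insert 1 (th ` {k. k < K \<and> th k \<noteq> 0}). x > 0"
    using th_nn by (auto simp: order.order_iff_strict)
  ultimately show ?thesis unfolding tm_def by (subst Min_gr_iff) auto
qed

lemma tm_le: "k < K \<Longrightarrow> th k \<noteq> 0 \<Longrightarrow> tm \<le> th k"
  unfolding tm_def by (intro Min_le) auto

lemma nM_XX: "nM n * tm \<le> XX n"
proof -
  have "nM n * tm = (\<Sum>k<K. if th k = 0 then 0 else real (n k) * tm)"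
    unfolding nM_def sum_distrib_right by (intro sum.cong) auto
  also have "\<dots> \<le> XX n" unfolding XX_def
    using tm_le by (intro sum_mono) (auto intro: mult_left_mono)
  finally show ?thesis .
qed

lemma sd_nM: "load K n > 0 \<Longrightarrow> sd n = 1 - nM n / real (load K n)"
proof -
  assume L: "load K n > 0"
  have a: "nM n / real (load K n) = (\<Sum>k<K. if th k = 0 then 0 else real (n k) / real (load K n))"
    unfolding nM_def sum_divide_distrib by (intro sum.cong) auto
  have "sd n + nM n / real (load K n) = (\<Sum>k<K. (if th k = 0 then real (n k) / real (load K n) else 0) + (if th k = 0 then 0 else real (n k) / real (load K n)))"
    unfolding sd_eq a sum.distrib by simp
  also have "\<dots> = (\<Sum>k<K. real (n k) / real (load K n))"
    by (intro sum.cong) auto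
  also have "\<dots> = (\<Sum>k<K. real (n k)) / real (load K n)" by (simp add: sum_divide_distrib)
  also have "(\<Sum>k<K. real (n k)) = real (load K n)" by (simp add: load_def)
  also have "real (load K n) / real (load K n) = 1" using L by simp
  finally show ?thesis by simp
qed

definition "eta = min (w0 / 2) ((1 - rhoS) / (6 * C0))"
definition "X0 = 2 * (rhoS + w0 * Lam + 1) / w0"
definition "L0 = 6 * (X0 / tm) / (1 - rhoS) + 1"

lemma eta_pos: "eta > 0" unfolding eta_def using w0_pos rho1 C0_pos by auto

lemma drift:
  assumes "real (load K n) \<ge> L0"
  shows "Dg VV n \<le> - eta * cc n"
proof -
  define X where "X = XX n"
  define s where "s = sd n"
  define r where "r = rhoS"
  define d where "d = 1 - rhoS"
  have r1: "r < 1" "r \<ge> 0" "d = 1 - r" "d > 0" using rho1 rhoS_nn by (auto simp: r_def d_def)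
  have Xnn: "X \<ge> 0" using XX_nn by (simp add: X_def)
  have wL: "w0 * Lam \<le> d / 3" using w0_Lam by (simp add: d_def)
  have DV: "Dg VV n \<le> r + d / 3 - s - w0 * X"
    using DV_le[of n] wL unfolding X_def s_def r_def by linarith
  have ecc: "- eta * cc n \<ge> - (d / 6) - w0 * X / 2"
  proof -
    have "eta * C0 \<le> d / 6"
    proof -
      have "eta * C0 \<le> (1 - rhoS) / (6 * C0) * C0"
        using C0_pos by (intro mult_right_mono) (auto simp: eta_def)
      also have "\<dots> = d / 6" using C0_pos by (simp add: d_def)
      finally show ?thesis .
    qed
    moreover have "eta * X \<le> (w0 / 2) * X" using Xnn by (intro mult_right_mono) (auto simp: eta_def)
    moreover have "- eta * cc n = - (eta * C0) - eta * X" by (simp add: cc_eq X_def algebra_simps)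
    moreover have "(w0 / 2) * X = w0 * X / 2" by simp
    ultimately show ?thesis by linarith
  qed
  have key: "r + d / 6 + d / 3 \<le> s + w0 * X / 2"
  proof (cases "X \<ge> X0")
    case True
    have "w0 * X0 / 2 = rhoS + w0 * Lam + 1" unfolding X0_def using w0_pos by simp
    moreover have "w0 * X0 \<le> w0 * X" using True w0_pos by (intro mult_left_mono) auto
    moreover have "w0 * Lam \<ge> 0" using w0_pos Lam_nn by simp
    moreover have "s \<ge> 0" using sd_nn by (simp add: s_def)
    ultimately show ?thesis using r1 unfolding r_def by linarith
  next
    case False
    have Lpos: "real (load K n) > 0"
    proof -
      have "X0 \<ge> 0" unfolding X0_def using w0_pos rhoS_nn Lam_nn by simp
      then have "L0 \<ge> 1" unfolding L0_def using tm_pos rho1 by simp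
      then show ?thesis using assms by simp
    qed
    have "nM n * tm \<le> X" using nM_XX by (simp add: X_def)
    then have "nM n \<le> X0 / tm" using False tm_pos by (simp add: le_divide_eq)
    moreover have "X0 / tm \<le> d / 6 * real (load K n)"
    proof -
      have "X0 / tm = d / 6 * (6 * (X0 / tm) / d)" using r1 by simp
      also have "\<dots> \<le> d / 6 * L0" unfolding L0_def using r1 by (intro mult_left_mono) (auto simp: d_def)
      also have "\<dots> \<le> d / 6 * real (load K n)" using assms r1 by (intro mult_left_mono) auto
      finally show ?thesis .
    qed
    ultimately have "nM n \<le> d / 6 * real (load K n)" by linarith
    then have "nM n / real (load K n) \<le> d / 6" using Lpos by (simp add: divide_le_eq)
    then have "s \<ge> 1 - d / 6" using sd_nM[of n] Lpos by (simp add: s_def)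
    moreover have "w0 * X / 2 \<ge> 0" using w0_pos Xnn by simp
    ultimately show ?thesis using r1 by linarith
  qed
  show ?thesis using DV ecc key by linarith
qed

definition "L1 = nat \<lceil>L0\<rceil>"

definition "Dr n = Dg VV n / cc n"

lemma Dr_le_bb: "Dr n \<le> bb"
proof (cases "Dg VV n \<le> 0")
  case True
  then have "Dg VV n / cc n \<le> 0" using cc_pos[of n] by (simp add: divide_nonpos_pos)
  then show ?thesis using bb_nn by (simp add: Dr_def)
next
  case False
  then have "Dg VV n / cc n \<le> Dg VV n" using cc_ge1[of n] by (simp add: divide_le_eq)
  then show ?thesis using DV_le_bb[of n] by (simp add: Dr_def)
qed

lemma Dr_far: "n \<notin> BB K L1 \<Longrightarrow> n \<in> st \<Longrightarrow> Dr n \<le> - eta"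
proof -
  assume "n \<notin> BB K L1" "n \<in> st"
  then have "load K n > L1" by (auto simp: BB_def)
  then have "real (load K n) \<ge> L0" unfolding L1_def by linarith
  then have "Dg VV n \<le> - eta * cc n" by (rule drift)
  then show ?thesis using cc_pos[of n] by (simp add: Dr_def divide_le_eq)
qed

lemma Dr_bound: "n \<in> st \<Longrightarrow> Dr n \<le> - eta + (eta + bb) * (if n \<in> BB K L1 then 1 else 0)"
  using Dr_le_bb[of n] Dr_far[of n] by auto

end

lemma diag_conv:
  fixes x :: "nat \<Rightarrow> nat \<Rightarrow> real"
  assumes "\<And>i j. x i j \<in> {0..1}"
  shows "\<exists>r. strict_mono r \<and> (\<forall>j. convergent (\<lambda>i. x (r i) j))"
proof -
  interpret subseqs "\<lambda>j s. convergent (\<lambda>i. x (s i) j)"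
  proof
    fix j and s :: "nat \<Rightarrow> nat" assume "strict_mono s"
    have sc: "seq_compact {0..1::real}" by (rule compact_imp_seq_compact[OF compact_Icc])
    have "\<exists>l\<in>{0..1}. \<exists>r. strict_mono r \<and> ((\<lambda>i. x (s i) j) \<circ> r) \<longlonglongrightarrow> l"
      using sc[unfolded seq_compact_def, rule_format, of "\<lambda>i. x (s i) j"] assms by auto
    then obtain l r where "strict_mono r" "((\<lambda>i. x (s i) j) \<circ> r) \<longlonglongrightarrow> l"
      by blast
    then show "\<exists>r'. strict_mono r' \<and> convergent (\<lambda>i. x ((s \<circ> r') i) j)"
      by (auto simp: convergent_def o_def)
  qed
  have "convergent (\<lambda>i. x (diagseq i) j)" for j
  proof -
    have "convergent (\<lambda>i. x ((diagseq \<circ> (+) (Suc j)) i) j)"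
    proof (rule diagseq_holds)
      fix r s n assume "strict_mono (r :: nat \<Rightarrow> nat)" "convergent (\<lambda>i. x (s i) n)"
      then show "convergent (\<lambda>i. x ((s \<circ> r) i) n)"
        by (auto simp: convergent_def o_def intro: LIMSEQ_subseq_LIMSEQ[unfolded o_def])
    qed
    then have "convergent (\<lambda>i. x (diagseq (i + Suc j)) j)" by (simp add: o_def add.commute)
    then show ?thesis by (rule iffD1[OF convergent_ignore_initial_segment])
  qed
  then show ?thesis using subseq_diagseq by blast
qed

context psq1
begin

lemma EV: "T < N \<Longrightarrow> (\<Sum>n\<in>BB K N. pt T n * VV n) = (\<Sum>t<T. \<Sum>n\<in>BB K N. pt t n * Dr n)"
proof (induction T)
  case 0
  have "z \<in> BB K N" using z_st by (simp add: BB_def load_def)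
  have "(\<Sum>n\<in>BB K N. pt 0 n * VV n) = (\<Sum>n\<in>BB K N. if n = z then VV n else 0)"
    by (intro sum.cong) (auto simp: pt_0 p0_def)
  also have "\<dots> = VV z" using \<open>z \<in> BB K N\<close> by (simp add: sum.delta[OF finite_BB])
  finally show ?case by (simp add: VV_z)
next
  case (Suc T)
  have "(\<Sum>n\<in>BB K N. pt (Suc T) n * VV n) = (\<Sum>n\<in>BB K N. pt T n * (VV n + Dg VV n / cc n))"
    unfolding pt_Suc using Suc.prems by (intro stp_sum[OF supp_pt[of T]]) simp
  also have "\<dots> = (\<Sum>n\<in>BB K N. pt T n * VV n) + (\<Sum>n\<in>BB K N. pt T n * Dr n)"
    by (simp add: Dr_def distrib_left sum.distrib)
  also have "(\<Sum>n\<in>BB K N. pt T n * VV n) = (\<Sum>t<T. \<Sum>n\<in>BB K N. pt t n * Dr n)"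
    using Suc by simp
  finally show ?case by simp
qed

lemma ind_sum: "t < N \<Longrightarrow> (\<Sum>n\<in>BB K N. pt t n * (if n \<in> BB K L1 then 1 else 0)) = (\<Sum>n\<in>BB K L1. pt t n)"
proof -
  assume t: "t < N"
  have "(\<Sum>n\<in>BB K N. pt t n * (if n \<in> BB K L1 then 1 else 0)) = (\<Sum>n\<in>BB K (N + L1). pt t n * (if n \<in> BB K L1 then 1 else 0))"
    using supp_sum[OF supp_pt[of t], of N] supp_sum[OF supp_pt[of t], of "N + L1"] t by simp
  also have "\<dots> = (\<Sum>n\<in>BB K (N + L1). if n \<in> BB K L1 then pt t n else 0)"
    by (intro sum.cong) auto
  also have "\<dots> = (\<Sum>n\<in>BB K (N + L1) \<inter> BB K L1. pt t n)"
    by (rule sum.inter_restrict[OF finite_BB, symmetric])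
  also have "BB K (N + L1) \<inter> BB K L1 = BB K L1" by (auto simp: BB_def)
  finally show ?thesis .
qed

lemma step_bound: "t < N \<Longrightarrow> (\<Sum>n\<in>BB K N. pt t n * Dr n) \<le> - eta + (eta + bb) * (\<Sum>n\<in>BB K L1. pt t n)"
proof -
  assume t: "t < N"
  have "(\<Sum>n\<in>BB K N. pt t n * Dr n) \<le> (\<Sum>n\<in>BB K N. pt t n * (- eta + (eta + bb) * (if n \<in> BB K L1 then 1 else 0)))"
    using Dr_bound pt_nn by (intro sum_mono mult_left_mono) (auto simp: BB_def)
  also have "\<dots> = (\<Sum>n\<in>BB K N. - eta * pt t n + (eta + bb) * (pt t n * (if n \<in> BB K L1 then 1 else 0)))"
    by (intro sum.cong refl) (simp add: algebra_simps)
  also have "\<dots> = - eta * (\<Sum>n\<in>BB K N. pt t n) + (eta + bb) * (\<Sum>n\<in>BB K N. pt t n * (if n \<in> BB K L1 then 1 else 0))"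
    by (simp only: sum.distrib sum_distrib_left)
  also have "\<dots> = - eta + (eta + bb) * (\<Sum>n\<in>BB K L1. pt t n)"
    using pt_mass[OF t] ind_sum[OF t] by simp
  finally show ?thesis .
qed

lemma cesaro_F: "(\<Sum>t<T. \<Sum>n\<in>BB K L1. pt t n) \<ge> eta * real T / (eta + bb)"
proof -
  have "0 \<le> (\<Sum>n\<in>BB K (T + 1). pt T n * VV n)"
    using pt_nn VV_nn by (intro sum_nonneg mult_nonneg_nonneg) auto
  also have "\<dots> = (\<Sum>t<T. \<Sum>n\<in>BB K (T + 1). pt t n * Dr n)" by (rule EV) simp
  also have "\<dots> \<le> (\<Sum>t<T. - eta + (eta + bb) * (\<Sum>n\<in>BB K L1. pt t n))"
    by (intro sum_mono step_bound) simp
  also have "\<dots> = - eta * real T + (eta + bb) * (\<Sum>t<T. \<Sum>n\<in>BB K L1. pt t n)"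
    by (simp add: sum.distrib sum_distrib_left sum_subtractf)
  finally have "eta * real T \<le> (eta + bb) * (\<Sum>t<T. \<Sum>n\<in>BB K L1. pt t n)" by simp
  moreover have "eta + bb > 0" using eta_pos bb_nn by simp
  ultimately show ?thesis by (simp add: divide_le_eq mult.commute)
qed

definition "AA i n = (\<Sum>t<Suc i. pt t n) / real (Suc i)"

lemma AA_nn: "AA i n \<ge> 0" unfolding AA_def using pt_nn by (intro divide_nonneg_nonneg sum_nonneg) auto

lemma AA_le1: "AA i n \<le> 1"
proof -
  have "(\<Sum>t<Suc i. pt t n) \<le> (\<Sum>t<Suc i. 1)" using pt_le1 by (intro sum_mono) auto
  then show ?thesis unfolding AA_def by (simp add: divide_le_eq)
qed

lemma AA_sum: "(\<Sum>n\<in>A. AA i n) = (\<Sum>t<Suc i. \<Sum>n\<in>A. pt t n) / real (Suc i)"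
  unfolding AA_def by (simp add: sum_divide_distrib[symmetric] sum.swap[of _ A])

lemma AA_F: "(\<Sum>n\<in>BB K L1. AA i n) \<ge> eta / (eta + bb)"
proof -
  have "eta * real (Suc i) / (eta + bb) \<le> (\<Sum>t<Suc i. \<Sum>n\<in>BB K L1. pt t n)" by (rule cesaro_F)
  then show ?thesis unfolding AA_sum by (simp add: le_divide_eq)
qed

lemma AA_sum_le: "(\<Sum>n\<in>BB K j. AA i n) \<le> 1"
proof -
  have "(\<Sum>t<Suc i. \<Sum>n\<in>BB K j. pt t n) \<le> (\<Sum>t<Suc i. 1)" using pt_sum_le by (intro sum_mono) auto
  then show ?thesis unfolding AA_sum by (simp add: divide_le_eq)
qed

lemma stp_linear: "stp (\<lambda>n. (\<Sum>t<T. f t n) / c) m = (\<Sum>t<T. stp (f t) m) / c"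
  unfolding stp_def by (simp add: sum_divide_distrib sum_distrib_right) (rule sum.swap)

lemma AA_defect: "stp (AA i) m - AA i m = (pt (Suc i) m - pt 0 m) / real (Suc i)"
proof -
  have "stp (AA i) m = (\<Sum>t<Suc i. pt (Suc t) m) / real (Suc i)"
    unfolding AA_def stp_linear pt_Suc by simp
  then have "stp (AA i) m - AA i m = (\<Sum>t<Suc i. pt (Suc t) m - pt t m) / real (Suc i)"
    unfolding AA_def by (simp add: sum_subtractf diff_divide_distrib)
  also have "\<dots> = (pt (Suc i) m - pt 0 m) / real (Suc i)"
    by (subst sum_lessThan_telescope) simp
  finally show ?thesis .
qed

end

context psq1
begin

lemma exists_limit:
  "\<exists>\<nu>. (\<forall>n\<in>st. \<nu> n \<ge> 0) \<and> (\<forall>j. (\<Sum>n\<in>BB K j. \<nu> n) \<le> 1) \<and> (\<Sum>n\<in>BB K L1. \<nu> n) \<ge> eta / (eta + bb)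
      \<and> (\<forall>m\<in>st. \<nu> m = (\<Sum>n\<in>BB K (load K m + 1). \<nu> n * PP n m))"
proof -
  define e where "e = from_nat_into st"
  have st_ne: "st \<noteq> {}" using z_st by auto
  have e_onto: "\<exists>j. e j = n" if "n \<in> st" for n
  proof -
    have "n \<in> range e" using range_from_nat_into[OF st_ne countable_states] that unfolding e_def by simp
    then show ?thesis by auto
  qed
  obtain r where r: "strict_mono r" "\<forall>j. convergent (\<lambda>i. AA (r i) (e j))"
    using diag_conv[of "\<lambda>i j. AA i (e j)"] AA_nn AA_le1 by auto
  have conv: "convergent (\<lambda>i. AA (r i) n)" if "n \<in> st" for n
    using e_onto[OF that] r(2) by auto
  define \<nu> where "\<nu> n = lim (\<lambda>i. AA (r i) n)" for n
  have lim: "(\<lambda>i. AA (r i) n) \<longlonglongrightarrow> \<nu> n" if "n \<in> st" for n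
    using conv[OF that] unfolding \<nu>_def by (simp add: convergent_LIMSEQ_iff)
  have sumlim: "(\<lambda>i. \<Sum>n\<in>BB K j. AA (r i) n) \<longlonglongrightarrow> (\<Sum>n\<in>BB K j. \<nu> n)" for j
    by (intro tendsto_sum lim) (auto simp: BB_def)
  have nn: "\<forall>n\<in>st. \<nu> n \<ge> 0"
  proof
    fix n assume n: "n \<in> st"
    show "0 \<le> \<nu> n" by (rule LIMSEQ_le_const[OF lim[OF n]]) (use AA_nn in auto)
  qed
  have le1: "\<forall>j. (\<Sum>n\<in>BB K j. \<nu> n) \<le> 1"
  proof
    fix j
    show "(\<Sum>n\<in>BB K j. \<nu> n) \<le> 1" by (rule LIMSEQ_le_const2[OF sumlim[of j]]) (use AA_sum_le in auto)
  qed
  have F: "(\<Sum>n\<in>BB K L1. \<nu> n) \<ge> eta / (eta + bb)"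
    using sumlim[of L1] AA_F by (auto intro: LIMSEQ_le_const)
  have bal: "\<nu> m = (\<Sum>n\<in>BB K (load K m + 1). \<nu> n * PP n m)" if m: "m \<in> st" for m
  proof -
    have l1: "(\<lambda>i. stp (AA (r i)) m) \<longlonglongrightarrow> (\<Sum>n\<in>BB K (load K m + 1). \<nu> n * PP n m)"
      unfolding stp_def by (intro tendsto_sum tendsto_mult_right lim) (auto simp: BB_def)
    have l2: "(\<lambda>i. stp (AA (r i)) m - AA (r i) m) \<longlonglongrightarrow> 0"
    proof (rule Lim_null_comparison)
      show "(\<lambda>i. inverse (real (Suc i))) \<longlonglongrightarrow> 0" by (rule LIMSEQ_inverse_real_of_nat)
      show "\<forall>\<^sub>F i in sequentially. norm (stp (AA (r i)) m - AA (r i) m) \<le> inverse (real (Suc i))"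
      proof (intro always_eventually allI)
        fix i
        have "\<bar>pt (Suc (r i)) m - pt 0 m\<bar> \<le> 1"
          using pt_nn[of "Suc (r i)" m] pt_le1[of "Suc (r i)" m] pt_nn[of 0 m] pt_le1[of 0 m] by linarith
        moreover have "i \<le> r i" using seq_suble[OF r(1)] by simp
        ultimately have "\<bar>pt (Suc (r i)) m - pt 0 m\<bar> / real (Suc (r i)) \<le> 1 / real (Suc i)"
          by (intro frac_le) auto
        then show "norm (stp (AA (r i)) m - AA (r i) m) \<le> inverse (real (Suc i))"
          unfolding AA_defect real_norm_def abs_divide by (simp add: divide_inverse)
      qed
    qed
    have "(\<lambda>i. stp (AA (r i)) m - (stp (AA (r i)) m - AA (r i) m)) \<longlonglongrightarrow> (\<Sum>n\<in>BB K (load K m + 1). \<nu> n * PP n m) - 0"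
      by (intro tendsto_diff l1 l2)
    then have "(\<lambda>i. AA (r i) m) \<longlonglongrightarrow> (\<Sum>n\<in>BB K (load K m + 1). \<nu> n * PP n m)" by simp
    then show ?thesis using lim[OF m] LIMSEQ_unique by blast
  qed
  show ?thesis using nn le1 F bal by blast
qed

lemma exists_stat: "\<exists>p. stationary_distribution st q p"
proof -
  obtain \<nu> where nn: "\<forall>n\<in>st. \<nu> n \<ge> 0" and le1: "\<forall>j. (\<Sum>n\<in>BB K j. \<nu> n) \<le> 1"
    and F: "(\<Sum>n\<in>BB K L1. \<nu> n) \<ge> eta / (eta + bb)"
    and bal: "\<forall>m\<in>st. \<nu> m = (\<Sum>n\<in>BB K (load K m + 1). \<nu> n * PP n m)"
    using exists_limit by blast
  define g where "g n = \<nu> n / cc n" for n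
  have g_nn: "g n \<ge> 0" if "n \<in> st" for n using nn that cc_pos[of n] by (simp add: g_def)
  have g_le: "g n \<le> \<nu> n" if "n \<in> st" for n
  proof -
    have "\<nu> n / cc n \<le> \<nu> n / 1"
      using nn that cc_ge1[of n] by (intro divide_left_mono) auto
    then show ?thesis by (simp add: g_def)
  qed
  have summ: "g summable_on st"
  proof (rule nonneg_bdd_above_summable_on)
    show "\<And>x. x \<in> st \<Longrightarrow> 0 \<le> g x" by (rule g_nn)
    show "bdd_above (sum g ` {F. F \<subseteq> st \<and> finite F})"
    proof (rule bdd_aboveI2)
      fix F assume F: "F \<in> {F. F \<subseteq> st \<and> finite F}"
      then have Fs: "F \<subseteq> st" "finite F" by auto
      have sub: "F \<subseteq> BB K (\<Sum>n\<in>F. load K n)"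
      proof
        fix x assume "x \<in> F"
        then have "load K x \<le> (\<Sum>n\<in>F. load K n)" using Fs by (intro member_le_sum) auto
        then show "x \<in> BB K (\<Sum>n\<in>F. load K n)" using \<open>x \<in> F\<close> Fs by (auto simp: BB_def)
      qed
      have "sum g F \<le> sum \<nu> F" using g_le Fs by (intro sum_mono) auto
      also have "\<dots> \<le> (\<Sum>n\<in>BB K (\<Sum>n\<in>F. load K n). \<nu> n)"
        using sub nn by (intro sum_mono2 finite_BB) (auto simp: BB_def)
      also have "\<dots> \<le> 1" using le1 by blast
      finally show "sum g F \<le> 1" .
    qed
  qed
  define Z where "Z = infsum g st"
  have hs: "(g has_sum Z) st" using summ unfolding Z_def by simp
  have gam: "eta / (eta + bb) > 0" using eta_pos bb_nn by simp
  obtain n0 where n0: "n0 \<in> BB K L1" "\<nu> n0 > 0"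
  proof (rule ccontr)
    assume "\<not> thesis"
    then have "\<forall>n\<in>BB K L1. \<nu> n \<le> 0" using that by force
    then have "(\<Sum>n\<in>BB K L1. \<nu> n) \<le> 0" by (intro sum_nonpos) auto
    then show False using F gam by linarith
  qed
  have n0st: "n0 \<in> st" using n0 by (auto simp: BB_def)
  have "sum g {n0} \<le> Z" unfolding Z_def using summ n0st g_nn by (intro finite_sum_le_infsum) auto
  moreover have "g n0 > 0" using n0 cc_pos[of n0] by (simp add: g_def)
  ultimately have Zpos: "Z > 0" by simp
  define p where "p n = inverse Z * g n" for n
  have p_hs: "(p has_sum 1) st"
    using has_sum_cmult_right[OF hs, of "inverse Z"] Zpos unfolding p_def by simp
  have p_nn: "p n \<ge> 0" if "n \<in> st" for n using g_nn[OF that] Zpos by (simp add: p_def)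
  have p_bal: "p m * qo m = (\<Sum>n\<in>BB K (load K m + 1). p n * q n m)" if m: "m \<in> st" for m
  proof -
    have mB: "m \<in> BB K (load K m + 1)" using m by (simp add: BB_def)
    have "\<nu> m = (\<Sum>n\<in>BB K (load K m + 1). \<nu> n * PP n m)" using bal m by blast
    also have "\<dots> = (\<Sum>n\<in>BB K (load K m + 1). g n * q n m + (if n = m then \<nu> m * (1 - qo m / cc m) else 0))"
      by (intro sum.cong refl) (auto simp: PP_def g_def algebra_simps)
    also have "\<dots> = (\<Sum>n\<in>BB K (load K m + 1). g n * q n m) + \<nu> m * (1 - qo m / cc m)"
      using mB by (simp add: sum.distrib sum.delta[OF finite_BB])
    finally have "g m * qo m = (\<Sum>n\<in>BB K (load K m + 1). g n * q n m)"
      using cc_pos[of m] by (simp add: g_def algebra_simps diff_divide_distrib)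
    then have "inverse Z * (g m * qo m) = inverse Z * (\<Sum>n\<in>BB K (load K m + 1). g n * q n m)" by simp
    then show ?thesis by (simp add: p_def sum_distrib_left mult.assoc)
  qed
  have "stationary_distribution st q p"
    by (rule balance_fin_rev) (use p_nn p_hs p_bal in auto)
  then show ?thesis by blast
qed

end

theorem proposition1:
  fixes K :: nat and lam mu th :: "nat \<Rightarrow> real"
  assumes "K \<ge> 1"
    and "\<And>k. k < K \<Longrightarrow> lam k > 0"
    and "\<And>k. k < K \<Longrightarrow> mu k > 0"
    and "\<And>k. k < K \<Longrightarrow> th k \<ge> 0"
  shows "has_stationary_regime (states K) (ps_rate K lam mu th) \<longleftrightarrow>
         (\<Sum>k\<in>{k. k < K \<and> th k = 0}. lam k / mu k) < 1"
proof -
  interpret psq K lam mu th using assms by unfold_locales auto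
  show ?thesis
  proof
    assume "has_stationary_regime (states K) (ps_rate K lam mu th)"
    then obtain p where "stationary_distribution st q p" unfolding has_stationary_regime_def by blast
    then have "rhoS < 1" by (rule stat_imp_rho)
    then show "(\<Sum>k\<in>{k. k < K \<and> th k = 0}. lam k / mu k) < 1" by (simp add: rhoS_eq)
  next
    assume "(\<Sum>k\<in>{k. k < K \<and> th k = 0}. lam k / mu k) < 1"
    then have "rhoS < 1" by (simp add: rhoS_eq)
    then interpret psq1 K lam mu th by unfold_locales
    show "has_stationary_regime (states K) (ps_rate K lam mu th)"
      using exists_stat unfolding has_stationary_regime_def by blast
  qed
qed

end
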